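(* Let $s=(s_1,\ldots,s_n)$ be any sequence of positive integers. Then the $s$-derangement polynomial $d_n^s(z)$ is real-rooted, and hence log-concave and unimodal.
   Context: For a lattice $d$-simplex $\Delta=\mathrm{conv}(v^{(0)},\ldots,v^{(d)})\subset\mathbb{R}^n$, its open parallelepiped is $\Pi^\circ_\Delta=\{\sum_{i=0}^d\lambda_i(v^{(i)},1)\in\mathbb{R}^{n+1}: 0<\lambda_i<1\}$, and its local $h^\ast$-polynomial (box polynomial) is $\ell^\ast(\Delta;z)=\sum_{x\in\Pi^\circ_\Delta\cap\mathbb{Z}^{n+1}}z^{x_{n+1}}$. For a sequence of positive integers $s=(s_1,\ldots,s_n)$, the $s$-lecture hall simplex is $P_n^s=\{x\in\mathbb{R}^n: 0\le x_1/s_1\le x_2/s_2\le\cdots\le x_n/s_n\le 1\}$, and the $s$-derangement polynomial is $d_n^s(z):=\ell^\ast(P_n^s;z)$. A polynomial is real-rooted if all its zeros are real or it is identically zero. *)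

theory Defs
  imports Complex_Main "HOL-Computational_Algebra.Polynomial"
begin

text \<open>Points of R^m are modelled as functions nat => real, coordinates indexed 1..m
  (all other coordinates 0). A lattice d-simplex in R^n is given by its vertices
  v 0, ..., v d (each v i :: nat => real, coordinates 1..n).\<close>

text \<open>Open parallelepiped of the simplex conv(v 0, ..., v d) in R^(n+1):
  points sum_i lambda_i (v i, 1) with 0 < lambda_i < 1.\<close>
definition open_parallelepiped :: "nat \<Rightarrow> nat \<Rightarrow> (nat \<Rightarrow> nat \<Rightarrow> real) \<Rightarrow> (nat \<Rightarrow> real) set" where
  "open_parallelepiped n d v =
     {x. \<exists>l :: nat \<Rightarrow> real. (\<forall>i\<le>d. 0 < l i \<and> l i < 1) \<and>
          x = (\<lambda>j. if 1 \<le> j \<and> j \<le> n then (\<Sum>i\<le>d. l i * v i j)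
                    else if j = n + 1 then (\<Sum>i\<le>d. l i) else 0)}"

definition box_points :: "nat \<Rightarrow> nat \<Rightarrow> (nat \<Rightarrow> nat \<Rightarrow> real) \<Rightarrow> (nat \<Rightarrow> real) set" where
  "box_points n d v = {x \<in> open_parallelepiped n d v. \<forall>j. x j \<in> \<int>}"

definition local_hstar :: "nat \<Rightarrow> nat \<Rightarrow> (nat \<Rightarrow> nat \<Rightarrow> real) \<Rightarrow> int poly" where
  "local_hstar n d v = (\<Sum>x\<in>box_points n d v. monom 1 (nat \<lfloor>x (n + 1)\<rfloor>))"

definition lecture_hall_simplex :: "nat \<Rightarrow> (nat \<Rightarrow> nat) \<Rightarrow> (nat \<Rightarrow> real) set" where
  "lecture_hall_simplex n s =
     {x. (\<forall>j. (j < 1 \<or> n < j) \<longrightarrow> x j = 0) \<and>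
         (n \<ge> 1 \<longrightarrow> 0 \<le> x 1 / s 1 \<and> x n / s n \<le> 1) \<and>
         (\<forall>j. 1 \<le> j \<and> j < n \<longrightarrow> x j / s j \<le> x (j+1) / s (j+1))}"

text \<open>Its vertices: v k (k = 0..n) has coordinates x_j = s_j for j > n - k and 0 otherwise
  (these are the n+1 points where the chain of inequalities becomes 0 = ... = 0 <= 1 = ... = 1).\<close>
definition lecture_hall_vertex :: "nat \<Rightarrow> (nat \<Rightarrow> nat) \<Rightarrow> nat \<Rightarrow> nat \<Rightarrow> real" where
  "lecture_hall_vertex n s k j = (if n - k < j \<and> j \<le> n then real (s j) else 0)"

definition s_derangement_poly :: "nat \<Rightarrow> (nat \<Rightarrow> nat) \<Rightarrow> int poly" where
  "s_derangement_poly n s = local_hstar n n (lecture_hall_vertex n s)"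

definition real_rooted :: "int poly \<Rightarrow> bool" where
  "real_rooted p \<longleftrightarrow> p = 0 \<or> (\<forall>z::complex. poly (map_poly of_int p) z = 0 \<longrightarrow> z \<in> \<real>)"

definition log_concave_poly :: "int poly \<Rightarrow> bool" where
  "log_concave_poly p \<longleftrightarrow> (\<forall>k\<ge>1. coeff p (k - 1) * coeff p (k + 1) \<le> (coeff p k)\<^sup>2)"

definition unimodal_poly :: "int poly \<Rightarrow> bool" where
  "unimodal_poly p \<longleftrightarrow> (\<exists>m. (\<forall>k<m. coeff p k \<le> coeff p (k + 1)) \<and>
                           (\<forall>k\<ge>m. coeff p (k + 1) \<le> coeff p k))"

end

theory Submission
  imports Defs "HOL-Library.FuncSet" "HOL-Computational_Algebra.Fundamental_Theorem_Algebra"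
begin


definition sg :: "nat \<Rightarrow> (nat \<Rightarrow> nat) \<Rightarrow> nat \<Rightarrow> nat" where
  "sg n s j = (if 1 \<le> j \<and> j \<le> n then s j else 1)"

definition grid :: "nat \<Rightarrow> (nat \<Rightarrow> nat) \<Rightarrow> nat \<Rightarrow> real set" where
  "grid n s j = {r. \<exists>k::int. r = of_int k / of_nat (sg n s j)}"

fun uu :: "nat \<Rightarrow> (nat \<Rightarrow> nat) \<Rightarrow> nat \<Rightarrow> real \<Rightarrow> int poly" where
  "uu n s 0 \<mu> = (if \<mu> \<in> \<int> \<and> \<mu> \<le> 0 then monom 1 (nat \<lfloor>-\<mu>\<rfloor>) else 0)"
| "uu n s (Suc j) \<mu> = (if \<mu> \<in> grid n s (Suc j)
      then (\<Sum>\<nu> \<in> grid n s j \<inter> {\<mu>-1<..<\<mu>}. uu n s j \<nu>) else 0)"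

lemma sg_pos:
  assumes "\<forall>j. 1 \<le> j \<and> j \<le> n \<longrightarrow> 0 < s j"
  shows "0 < sg n s j"
  using assms by (simp add: sg_def)

lemma grid_shift:
  assumes "0 < sg n s j"
  shows "x \<in> grid n s j \<longleftrightarrow> x - 1 \<in> grid n s j"
proof
  assume "x \<in> grid n s j"
  then obtain k :: int where k: "x = of_int k / of_nat (sg n s j)" by (auto simp: grid_def)
  have "x - 1 = of_int (k - int (sg n s j)) / of_nat (sg n s j)"
    using assms by (simp add: k field_simps)
  then show "x - 1 \<in> grid n s j" unfolding grid_def by blast
next
  assume "x - 1 \<in> grid n s j"
  then obtain k :: int where k: "x - 1 = of_int k / of_nat (sg n s j)" by (auto simp: grid_def)
  have "x = of_int (k + int (sg n s j)) / of_nat (sg n s j)"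
    using assms k by (simp add: field_simps)
  then show "x \<in> grid n s j" unfolding grid_def by blast
qed

lemma grid_diff_int:
  assumes "0 < sg n s j" "x \<in> grid n s j" "x - y \<in> \<int>"
  shows "y \<in> grid n s j"
proof -
  obtain k :: int where k: "x = of_int k / of_nat (sg n s j)" using assms(2) by (auto simp: grid_def)
  obtain m :: int where m: "x - y = of_int m" using assms(3) by (auto elim: Ints_cases)
  have "y = of_int (k - m * int (sg n s j)) / of_nat (sg n s j)"
    using assms(1) k m by (simp add: field_simps)
  then show ?thesis unfolding grid_def by blast
qed

lemma grid_finite:
  assumes "0 < sg n s j"
  shows "finite (grid n s j \<inter> {a<..<b})"
proof -
  let ?m = "real (sg n s j)"
  have "grid n s j \<inter> {a<..<b} \<subseteq> (\<lambda>k::int. of_int k / ?m) ` {\<lfloor>a * ?m\<rfloor>..\<lceil>b * ?m\<rceil>}"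
  proof
    fix x assume x: "x \<in> grid n s j \<inter> {a<..<b}"
    then obtain k :: int where k: "x = of_int k / ?m" by (auto simp: grid_def)
    have "a * ?m < of_int k" "of_int k < b * ?m"
      using x k assms by (auto simp: field_simps)
    then have "k \<in> {\<lfloor>a * ?m\<rfloor>..\<lceil>b * ?m\<rceil>}"
      by (simp add: floor_le_iff le_ceiling_iff) linarith?
    then show "x \<in> (\<lambda>k::int. of_int k / ?m) ` {\<lfloor>a * ?m\<rfloor>..\<lceil>b * ?m\<rceil>}" using k by blast
  qed
  then show ?thesis by (rule finite_subset) simp
qed

lemma pCons0_sum: "pCons 0 (sum f A) = (\<Sum>x\<in>A. pCons 0 (f x))"
proof (induction A rule: infinite_finite_induct)
  case (insert x F) then show ?case by (metis (no_types) add_pCons add.right_neutral sum.insert)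
qed auto

lemma uu_shift:
  assumes pos: "\<forall>j. 1 \<le> j \<and> j \<le> n \<longrightarrow> 0 < s j"
  shows "\<mu> < 1 \<Longrightarrow> uu n s j (\<mu> - 1) = pCons 0 (uu n s j \<mu>)"
proof (induction j arbitrary: \<mu>)
  case 0
  show ?case
  proof (cases "\<mu> \<in> \<int>")
    case True
    then obtain k :: int where k: "\<mu> = of_int k" by (auto elim: Ints_cases)
    with 0 have "k \<le> 0" by simp
    then have "nat (1 - k) = Suc (nat (- k))" by simp
    then show ?thesis using k \<open>k \<le> 0\<close> by (simp add: monom_Suc)
  next
    case False
    then have "\<mu> - 1 \<notin> \<int>"
      by (metis Ints_1 Ints_add diff_add_cancel)
    then show ?thesis using False by simp
  qed
next
  case (Suc j)
  have sp: "0 < sg n s (Suc j)" "0 < sg n s j" using sg_pos[OF pos] by auto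
  have g: "\<mu> - 1 \<in> grid n s (Suc j) \<longleftrightarrow> \<mu> \<in> grid n s (Suc j)"
    using grid_shift[OF sp(1)] by simp
  have re: "grid n s j \<inter> {\<mu> - 1 - 1<..<\<mu> - 1} = (\<lambda>x. x - 1) ` (grid n s j \<inter> {\<mu>-1<..<\<mu>})"
  proof
    show "grid n s j \<inter> {\<mu> - 1 - 1<..<\<mu> - 1} \<subseteq> (\<lambda>x. x - 1) ` (grid n s j \<inter> {\<mu>-1<..<\<mu>})"
    proof
      fix x assume x: "x \<in> grid n s j \<inter> {\<mu> - 1 - 1<..<\<mu> - 1}"
      have "x + 1 \<in> grid n s j" using x grid_shift[OF sp(2), of "x+1"] by simp
      then have "x + 1 \<in> grid n s j \<inter> {\<mu>-1<..<\<mu>}" using x by auto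
      then show "x \<in> (\<lambda>x. x - 1) ` (grid n s j \<inter> {\<mu>-1<..<\<mu>})" by force
    qed
    show "(\<lambda>x. x - 1) ` (grid n s j \<inter> {\<mu>-1<..<\<mu>}) \<subseteq> grid n s j \<inter> {\<mu> - 1 - 1<..<\<mu> - 1}"
      using grid_shift[OF sp(2)] by auto
  qed
  have "(\<Sum>\<nu> \<in> grid n s j \<inter> {\<mu> - 1 - 1<..<\<mu> - 1}. uu n s j \<nu>)
      = (\<Sum>\<nu> \<in> grid n s j \<inter> {\<mu>-1<..<\<mu>}. uu n s j (\<nu> - 1))"
    unfolding re by (subst sum.reindex) (auto simp: inj_on_def)
  also have "\<dots> = (\<Sum>\<nu> \<in> grid n s j \<inter> {\<mu>-1<..<\<mu>}. pCons 0 (uu n s j \<nu>))"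
    using Suc by (intro sum.cong) auto
  finally show ?case using g by (simp add: pCons0_sum)
qed


definition ev :: "int poly \<Rightarrow> complex \<Rightarrow> complex" where
  "ev p z = poly (map_poly of_int p) z"

lemma ev_add: "ev (p + q) z = ev p z + ev q z"
proof -
  have "map_poly (of_int :: int \<Rightarrow> complex) (p + q) = map_poly of_int p + map_poly of_int q"
    by (rule poly_eqI) (simp add: coeff_map_poly)
  then show ?thesis by (simp add: ev_def)
qed

lemma ev_0 [simp]: "ev 0 z = 0" by (simp add: ev_def)

lemma ev_sum: "ev (sum f A) z = (\<Sum>x\<in>A. ev (f x) z)"
  by (induction A rule: infinite_finite_induct) (auto simp: ev_add)

lemma ev_pCons0: "ev (pCons 0 p) z = z * ev p z"
proof -
  have "map_poly (of_int :: int \<Rightarrow> complex) (pCons 0 p) = pCons 0 (map_poly of_int p)"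
    by (rule poly_eqI) (simp add: coeff_map_poly coeff_pCons split: nat.split)
  then show ?thesis by (simp add: ev_def)
qed

lemma ev_monom1: "ev (monom 1 k) z = z ^ k"
proof -
  have "map_poly (of_int :: int \<Rightarrow> complex) (monom 1 k) = monom 1 k"
    by (rule poly_eqI) (simp add: coeff_map_poly coeff_monom)
  then show ?thesis by (simp add: ev_def poly_monom)
qed

definition h0 :: "complex \<Rightarrow> bool" where
  "h0 x \<longleftrightarrow> 0 < Im x \<or> (Im x = 0 \<and> 0 \<le> Re x)"

lemma h0_0 [simp]: "h0 0" by (simp add: h0_def)

lemma h0_add: "h0 x \<Longrightarrow> h0 y \<Longrightarrow> h0 (x + y)"
  by (auto simp: h0_def)

lemma h0_sum: "(\<And>x. x \<in> A \<Longrightarrow> h0 (f x)) \<Longrightarrow> h0 (sum f A)"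
  by (induction A rule: infinite_finite_induct) (auto intro: h0_add)

lemma h0_norm: "h0 (cnj a * a)"
proof -
  have "cnj a * a = of_real ((cmod a)\<^sup>2)" by (metis complex_norm_square mult.commute)
  then show ?thesis by (simp add: h0_def)
qed

lemma h0_z_norm: "0 < Im z \<Longrightarrow> h0 (z * (cnj a * a))"
proof -
  assume z: "0 < Im z"
  define r where "r = (cmod a)\<^sup>2"
  have e: "z * (cnj a * a) = z * of_real r" unfolding r_def by (metis complex_norm_square mult.commute)
  show ?thesis
  proof (cases "a = 0")
    case False
    then have "r > 0" by (simp add: r_def)
    then have "Im (z * of_real r) > 0" using z by simp
    then have "h0 (z * of_real r)" unfolding h0_def by blast
    then show ?thesis using e by (simp only:)
  qed simp
qed

lemma h0_pos_nonzero: "a \<noteq> 0 \<Longrightarrow> h0 y \<Longrightarrow> cnj a * a + y \<noteq> 0"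
proof -
  assume a: "a \<noteq> 0" and y: "h0 y"
  define r where "r = (cmod a)\<^sup>2"
  have e: "cnj a * a = of_real r" unfolding r_def by (metis complex_norm_square mult.commute)
  have r: "r > 0" using a by (simp add: r_def)
  show ?thesis
  proof (cases "Im y = 0")
    case True
    then have "Re y \<ge> 0" using y by (simp add: h0_def)
    then have "Re (of_real r + y) > 0" using r by simp
    then have "of_real r + y \<noteq> 0" by (metis less_irrefl zero_complex.sel(1))
    then show ?thesis using e by metis
  next
    case False
    then have "Im (of_real r + y) \<noteq> 0" by simp
    then have "of_real r + y \<noteq> 0" by (metis zero_complex.sel(2))
    then show ?thesis using e by metis
  qed
qed

lemma window_lemma:
  fixes U :: "real \<Rightarrow> complex" and Gs :: "real set"
  assumes z: "0 < Im z"
    and Gsh: "\<And>x. x \<in> Gs \<longleftrightarrow> x - 1 \<in> Gs"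
    and fin: "\<And>a b. finite (Gs \<inter> {a<..<b})"
    and S: "\<And>b. b < 1 \<Longrightarrow> U (b - 1) = z * U b"
    and L: "\<And>a c. c < a \<Longrightarrow> a < 1 \<Longrightarrow> a - 1 \<le> c \<Longrightarrow> h0 (cnj (U a) * U c)"
    and mn: "\<nu> < \<mu>" "\<mu> < 1" "\<mu> - 1 \<le> \<nu>"
  shows "h0 (cnj (\<Sum>a \<in> Gs \<inter> {\<mu>-1<..<\<mu>}. U a) * (\<Sum>c \<in> Gs \<inter> {\<nu>-1<..<\<nu>}. U c))"
proof -
  define I where "I = Gs \<inter> {\<mu>-1<..<\<mu>}"
  define J where "J = Gs \<inter> {\<nu>-1<..<\<nu>}"
  define T where "T = Gs \<inter> {\<nu><..<\<mu>}"
  define f where "f = (\<lambda>(a, c). cnj (U a) * U c)"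
  define D1 where "D1 = (I \<inter> J) \<times> (I \<inter> J)"
  define D2 where "D2 = T \<times> ((\<lambda>b. b - 1) ` T)"
  define R where "R = I \<times> J - D1 - D2"
  have fI: "finite I" "finite J" "finite T" using fin by (auto simp: I_def J_def T_def)
  have D1s: "D1 \<subseteq> I \<times> J" by (auto simp: D1_def)
  have D2s: "D2 \<subseteq> I \<times> J"
  proof
    fix p assume "p \<in> D2"
    then obtain a b where p: "p = (a, b - 1)" "a \<in> T" "b \<in> T" by (auto simp: D2_def)
    have "b - 1 \<in> Gs" using p Gsh by (auto simp: T_def)
    then show "p \<in> I \<times> J" using p mn by (auto simp: I_def J_def T_def)
  qed
  have D12: "D1 \<inter> D2 = {}" by (auto simp: D1_def D2_def J_def T_def)
  have split: "I \<times> J = D1 \<union> D2 \<union> R" using D1s D2s by (auto simp: R_def)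
  have fin2: "finite D1" "finite D2" "finite R" using fI by (auto simp: D1_def D2_def R_def)
  have "cnj (sum U I) * sum U J = (\<Sum>a\<in>I. \<Sum>c\<in>J. cnj (U a) * U c)"
    by (simp add: cnj_sum sum_product)
  also have "\<dots> = sum f (I \<times> J)" by (simp add: sum.cartesian_product f_def)
  also have "\<dots> = sum f D1 + sum f D2 + sum f R"
    unfolding split using fin2 D12
    by (subst sum.union_disjoint, auto simp: R_def)+
  finally have eq: "cnj (sum U I) * sum U J = sum f D1 + sum f D2 + sum f R" .
  have "sum f D1 = cnj (sum U (I \<inter> J)) * sum U (I \<inter> J)"
    by (simp add: D1_def f_def sum.cartesian_product' cnj_sum sum_product)
  then have h1: "h0 (sum f D1)" using h0_norm[of "sum U (I \<inter> J)"] by (simp only:)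
  have "sum f D2 = (\<Sum>a\<in>T. \<Sum>b\<in>T. cnj (U a) * U (b - 1))"
    by (simp add: D2_def f_def sum.cartesian_product' sum.reindex inj_on_def)
  also have "\<dots> = (\<Sum>a\<in>T. \<Sum>b\<in>T. z * (cnj (U a) * U b))"
    using mn by (intro sum.cong refl) (auto simp: S T_def)
  also have "\<dots> = z * (\<Sum>a\<in>T. \<Sum>b\<in>T. cnj (U a) * U b)"
    by (simp add: sum_distrib_left)
  also have "\<dots> = z * (cnj (sum U T) * sum U T)"
    by (simp only: cnj_sum sum_product)
  finally have h2: "h0 (sum f D2)" using h0_z_norm[OF z, of "sum U T"] by (simp only:)
  have h3: "h0 (sum f R)"
  proof (rule h0_sum)
    fix p assume p: "p \<in> R"
    then obtain a c where ac: "p = (a, c)" "a \<in> I" "c \<in> J" "p \<notin> D1" "p \<notin> D2"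
      by (auto simp: R_def)
    have good: "c < a \<and> a - 1 \<le> c"
    proof (cases "a < \<nu>")
      case True
      then have "a \<in> J" using ac mn by (auto simp: I_def J_def)
      then have "c \<notin> I" using ac by (auto simp: D1_def)
      then have "c \<le> \<mu> - 1" using ac mn by (auto simp: I_def J_def)
      then show ?thesis using ac True mn by (auto simp: I_def J_def)
    next
      case False
      have "a - 1 \<le> c"
      proof (rule ccontr)
        assume "\<not> a - 1 \<le> c"
        then have "c + 1 < a" by simp
        have "c + 1 \<in> Gs" using ac Gsh[of "c+1"] by (auto simp: J_def)
        then have "c + 1 \<in> T" "a \<in> T" using ac mn \<open>c + 1 < a\<close> False
          by (auto simp: I_def J_def T_def)
        then have "p \<in> D2" unfolding D2_def using ac(1) by force
        then show False using ac by simp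
      qed
      then show ?thesis using ac False by (auto simp: J_def)
    qed
    then show "h0 (f p)" using L[of c a] ac mn by (auto simp: f_def I_def)
  qed
  show ?thesis using eq h1 h2 h3 by (simp add: I_def J_def h0_add)
qed


lemma ev_uu_Suc:
  "ev (uu n s (Suc j) \<mu>) z = (if \<mu> \<in> grid n s (Suc j)
      then (\<Sum>\<nu> \<in> grid n s j \<inter> {\<mu>-1<..<\<mu>}. ev (uu n s j \<nu>) z) else 0)"
  by (simp add: ev_sum)

lemma uu_inv:
  assumes pos: "\<forall>j. 1 \<le> j \<and> j \<le> n \<longrightarrow> 0 < s j" and z: "0 < Im z"
  shows "(\<forall>\<mu> \<nu>. \<nu> < \<mu> \<longrightarrow> \<mu> < 1 \<longrightarrow> \<mu> - 1 \<le> \<nu> \<longrightarrow>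
            h0 (cnj (ev (uu n s j \<mu>) z) * ev (uu n s j \<nu>) z)) \<and>
         (\<forall>\<mu><1. uu n s j \<mu> \<noteq> 0 \<longrightarrow> ev (uu n s j \<mu>) z \<noteq> 0)"
proof (induction j)
  case 0
  have z0: "z \<noteq> 0" using z by auto
  have L: "h0 (cnj (ev (uu n s 0 \<mu>) z) * ev (uu n s 0 \<nu>) z)"
    if mn: "\<nu> < \<mu>" "\<mu> < 1" "\<mu> - 1 \<le> \<nu>" for \<mu> \<nu>
  proof (cases "\<mu> \<in> \<int> \<and> \<mu> \<le> 0 \<and> \<nu> \<in> \<int> \<and> \<nu> \<le> 0")
    case True
    then obtain k m :: int where km: "\<mu> = of_int k" "\<nu> = of_int m" by (auto elim!: Ints_cases)
    then have "m = k - 1" using mn by linarith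
    moreover have "k \<le> 0" using True km by simp
    ultimately have "nat (- m) = Suc (nat (- k))" by simp
    then have "ev (uu n s 0 \<nu>) z = z * ev (uu n s 0 \<mu>) z"
      using True km by (simp add: ev_monom1)
    then show ?thesis using h0_z_norm[OF z, of "ev (uu n s 0 \<mu>) z"] by (simp add: ac_simps)
  next
    case False
    then show ?thesis by auto
  qed
  have N: "ev (uu n s 0 \<mu>) z \<noteq> 0" if "uu n s 0 \<mu> \<noteq> 0" for \<mu>
    using that z0 by (auto simp: ev_monom1 split: if_splits)
  show ?case using L N by blast
next
  case (Suc j)
  have sp: "0 < sg n s j" "0 < sg n s (Suc j)" using sg_pos[OF pos] by auto
  define U where "U = (\<lambda>x. ev (uu n s j x) z)"
  have IHL: "\<And>a c. c < a \<Longrightarrow> a < 1 \<Longrightarrow> a - 1 \<le> c \<Longrightarrow> h0 (cnj (U a) * U c)"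
    using Suc.IH by (auto simp: U_def)
  have IHN: "\<And>a. a < 1 \<Longrightarrow> uu n s j a \<noteq> 0 \<Longrightarrow> U a \<noteq> 0"
    using Suc.IH by (auto simp: U_def)
  have S: "\<And>b. b < 1 \<Longrightarrow> U (b - 1) = z * U b"
    unfolding U_def using uu_shift[OF pos] by (simp add: ev_pCons0)
  have L: "h0 (cnj (ev (uu n s (Suc j) \<mu>) z) * ev (uu n s (Suc j) \<nu>) z)"
    if mn: "\<nu> < \<mu>" "\<mu> < 1" "\<mu> - 1 \<le> \<nu>" for \<mu> \<nu>
  proof (cases "\<mu> \<in> grid n s (Suc j) \<and> \<nu> \<in> grid n s (Suc j)")
    case True
    have "h0 (cnj (\<Sum>a \<in> grid n s j \<inter> {\<mu>-1<..<\<mu>}. U a) * (\<Sum>c \<in> grid n s j \<inter> {\<nu>-1<..<\<nu>}. U c))"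
      by (rule window_lemma[where U=U and z=z and Gs="grid n s j" and \<mu>=\<mu> and \<nu>=\<nu>, OF z grid_shift[OF sp(1)] grid_finite[OF sp(1)] S IHL mn])
    then show ?thesis using True unfolding ev_uu_Suc U_def by simp
  next
    case False
    then show ?thesis by (auto simp: ev_uu_Suc)
  qed
  have N: "ev (uu n s (Suc j) \<mu>) z \<noteq> 0" if mu: "\<mu> < 1" "uu n s (Suc j) \<mu> \<noteq> 0" for \<mu>
  proof -
    define W where "W = grid n s j \<inter> {\<mu>-1<..<\<mu>}"
    have fW: "finite W" using grid_finite[OF sp(1)] by (simp add: W_def)
    have g: "\<mu> \<in> grid n s (Suc j)" and sne: "(\<Sum>\<nu>\<in>W. uu n s j \<nu>) \<noteq> 0"
      using mu by (auto simp: W_def split: if_splits)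
    then obtain a0 where a0: "a0 \<in> W" "uu n s j a0 \<noteq> 0" by (meson sum.neutral)
    define A where "A = {a \<in> W. U a \<noteq> 0}"
    have "a0 \<in> A" using a0 IHN mu by (auto simp: A_def W_def)
    have fA: "finite A" using fW by (simp add: A_def)
    define m where "m = Max A"
    have mA: "m \<in> A" using fA \<open>a0 \<in> A\<close> by (auto simp: m_def intro: Max_in)
    have mmax: "\<And>a. a \<in> A \<Longrightarrow> a \<le> m" using fA by (simp add: m_def)
    have "sum U W = U m + sum U (W - {m})"
      using mA fW by (simp add: A_def sum.remove)
    then have "cnj (U m) * sum U W = cnj (U m) * U m + (\<Sum>a\<in>W - {m}. cnj (U m) * U a)"
      by (simp add: distrib_left sum_distrib_left)
    moreover have "h0 (\<Sum>a\<in>W - {m}. cnj (U m) * U a)"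
    proof (rule h0_sum)
      fix a assume a: "a \<in> W - {m}"
      show "h0 (cnj (U m) * U a)"
      proof (cases "U a = 0")
        case False
        then have "a \<in> A" using a by (auto simp: A_def)
        then have "a < m" using mmax a by force
        moreover have "m - 1 \<le> a" "m < 1" using mA a mu by (auto simp: A_def W_def)
        ultimately show ?thesis using IHL by blast
      qed simp
    qed
    moreover have "U m \<noteq> 0" using mA by (simp add: A_def)
    ultimately have "cnj (U m) * sum U W \<noteq> 0" using h0_pos_nonzero by simp
    then have "sum U W \<noteq> 0" by auto
    then show ?thesis using g unfolding ev_uu_Suc U_def W_def by simp
  qed
  show ?case using L N by blast
qed



definition chains :: "nat \<Rightarrow> (nat \<Rightarrow> nat) \<Rightarrow> nat \<Rightarrow> (nat \<Rightarrow> real) set" where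
  "chains n s j = {c. c 0 = 0 \<and> (\<forall>i>j. c i = 0) \<and> (\<forall>i\<le>j. c i \<in> grid n s i) \<and>
                    (\<forall>i<j. c i < c (Suc i) \<and> c (Suc i) < c i + 1)}"

lemma chains_bounds:
  assumes "c \<in> chains n s j" "i \<le> j"
  shows "0 \<le> c i \<and> c i \<le> real i"
  using assms(2)
proof (induction i)
  case 0 then show ?case using assms(1) by (simp add: chains_def)
next
  case (Suc i)
  then have "c i < c (Suc i)" "c (Suc i) < c i + 1" using assms(1) by (auto simp: chains_def)
  then show ?case using Suc by auto
qed

lemma zero_in_grid: "0 \<in> grid n s j"
  unfolding grid_def by (rule CollectI, rule exI[of _ 0]) simp

lemma finite_chains:
  assumes pos: "\<forall>j. 1 \<le> j \<and> j \<le> n \<longrightarrow> 0 < s j"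
  shows "finite (chains n s j)"
proof -
  define F where "F = (\<Union>i\<le>j. grid n s i \<inter> {-1<..<real j + 1})"
  have fF: "finite F" unfolding F_def
    by (intro finite_UN_I finite_atMost grid_finite[OF sg_pos[OF pos]])
  have sub: "(\<lambda>c. restrict c {..j}) ` chains n s j \<subseteq> PiE {..j} (\<lambda>_. F)"
  proof
    fix f assume "f \<in> (\<lambda>c. restrict c {..j}) ` chains n s j"
    then obtain c where c: "c \<in> chains n s j" "f = restrict c {..j}" by auto
    have "c i \<in> F" if "i \<le> j" for i
    proof -
      have "c i \<in> grid n s i" using c that by (auto simp: chains_def)
      moreover have "0 \<le> c i" "c i \<le> real i" using chains_bounds[OF c(1) that] by auto
      moreover have "real i \<le> real j" using that by simp
      ultimately show ?thesis unfolding F_def using that by auto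
    qed
    then show "f \<in> PiE {..j} (\<lambda>_. F)" using c by (simp add: restrict_PiE_iff)
  qed
  have inj: "inj_on (\<lambda>c. restrict c {..j}) (chains n s j)"
  proof (rule inj_onI)
    fix c d assume cd: "c \<in> chains n s j" "d \<in> chains n s j" "restrict c {..j} = restrict d {..j}"
    show "c = d"
    proof
      fix i show "c i = d i"
      proof (cases "i \<le> j")
        case True
        then show ?thesis using cd(3) by (metis atMost_iff restrict_apply')
      next
        case False
        then show ?thesis using cd(1,2) by (auto simp: chains_def)
      qed
    qed
  qed
  have "finite ((\<lambda>c. restrict c {..j}) ` chains n s j)"
    by (rule finite_subset[OF sub]) (simp add: finite_PiE fF)
  then show ?thesis using inj finite_imageD by blast
qed

definition Cset :: "nat \<Rightarrow> (nat \<Rightarrow> nat) \<Rightarrow> nat \<Rightarrow> real \<Rightarrow> (nat \<Rightarrow> real) set" where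
  "Cset n s j \<mu> = {c \<in> chains n s j. \<mu> \<le> c j \<and> c j - \<mu> \<in> \<int>}"

lemma chains_0: "chains n s 0 = {\<lambda>_. 0}"
  by (auto simp: chains_def zero_in_grid fun_eq_iff) (metis neq0_conv)

lemma uu_chains:
  assumes pos: "\<forall>j. 1 \<le> j \<and> j \<le> n \<longrightarrow> 0 < s j"
  shows "uu n s j \<mu> = (\<Sum>c \<in> Cset n s j \<mu>. monom 1 (nat \<lfloor>c j - \<mu>\<rfloor>))"
proof (induction j arbitrary: \<mu>)
  case 0
  have "Cset n s 0 \<mu> = (if \<mu> \<in> \<int> \<and> \<mu> \<le> 0 then {\<lambda>_. 0} else {})"
    by (auto simp: Cset_def chains_0 minus_in_Ints_iff)
  then show ?case by simp
next
  case (Suc j)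
  have sp: "0 < sg n s j" "0 < sg n s (Suc j)" using sg_pos[OF pos] by auto
  define W where "W = grid n s j \<inter> {\<mu>-1<..<\<mu>}"
  have fW: "finite W" using grid_finite[OF sp(1)] by (simp add: W_def)
  have fC: "\<And>\<nu>. finite (Cset n s j \<nu>)"
    using finite_chains[OF pos] by (simp add: Cset_def)
  show ?case
  proof (cases "\<mu> \<in> grid n s (Suc j)")
    case False
    have "Cset n s (Suc j) \<mu> = {}"
    proof (rule ccontr)
      assume "Cset n s (Suc j) \<mu> \<noteq> {}"
      then obtain c where c: "c \<in> chains n s (Suc j)" "c (Suc j) - \<mu> \<in> \<int>"
        by (auto simp: Cset_def)
      then have "c (Suc j) \<in> grid n s (Suc j)" by (auto simp: chains_def)
      then have "\<mu> \<in> grid n s (Suc j)" using grid_diff_int[OF sp(2) _ c(2)] by blast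
      then show False using False by simp
    qed
    then show ?thesis using False by simp
  next
    case True
    have "uu n s (Suc j) \<mu> = (\<Sum>\<nu>\<in>W. \<Sum>c \<in> Cset n s j \<nu>. monom 1 (nat \<lfloor>c j - \<nu>\<rfloor>))"
      using True Suc.IH by (simp add: W_def)
    also have "\<dots> = (\<Sum>p \<in> Sigma W (Cset n s j). monom 1 (nat \<lfloor>snd p j - fst p\<rfloor>))"
      using fW fC by (simp add: sum.Sigma split_def)
    also have "\<dots> = (\<Sum>c \<in> Cset n s (Suc j) \<mu>. monom 1 (nat \<lfloor>c (Suc j) - \<mu>\<rfloor>))"
    proof (rule sum.reindex_bij_witness[of _ "\<lambda>p. (snd p)(Suc j := snd p j - fst p + \<mu>)"
                 "\<lambda>c. (c j - (c (Suc j) - \<mu>), c(Suc j := 0))", symmetric])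
      fix c assume c: "c \<in> Cset n s (Suc j) \<mu>"
      let ?p = "(c j - (c (Suc j) - \<mu>), c(Suc j := 0))"
      show "(snd ?p)(Suc j := snd ?p j - fst ?p + \<mu>) = c" by auto
      show "monom 1 (nat \<lfloor>snd ?p j - fst ?p\<rfloor>) = monom 1 (nat \<lfloor>c (Suc j) - \<mu>\<rfloor>)" by simp
      have cc: "c \<in> chains n s (Suc j)" "\<mu> \<le> c (Suc j)" "c (Suc j) - \<mu> \<in> \<int>"
        using c by (auto simp: Cset_def)
      have step: "c j < c (Suc j)" "c (Suc j) < c j + 1" using cc(1) by (auto simp: chains_def)
      have cg: "c j \<in> grid n s j" using cc(1) by (auto simp: chains_def)
      have "c j - fst ?p \<in> \<int>" using cc(3) by simp
      then have "fst ?p \<in> grid n s j" using grid_diff_int[OF sp(1) cg] by blast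
      then have "fst ?p \<in> W" using step by (auto simp: W_def)
      moreover have "snd ?p \<in> Cset n s j (fst ?p)"
        using cc by (auto simp: Cset_def chains_def)
      ultimately show "?p \<in> Sigma W (Cset n s j)" by auto
    next
      fix p assume p: "p \<in> Sigma W (Cset n s j)"
      obtain \<nu> c where pc: "p = (\<nu>, c)" by (cases p)
      have \<nu>: "\<nu> \<in> grid n s j" "\<mu> - 1 < \<nu>" "\<nu> < \<mu>" using p pc by (auto simp: W_def)
      have c: "c \<in> chains n s j" "\<nu> \<le> c j" "c j - \<nu> \<in> \<int>" using p pc by (auto simp: Cset_def)
      have c0: "c (Suc j) = 0" using c(1) by (auto simp: chains_def)
      show "(\<lambda>c. (c j - (c (Suc j) - \<mu>), c(Suc j := 0))) ((snd p)(Suc j := snd p j - fst p + \<mu>)) = p"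
        using pc c0 by auto
      have g: "c j - \<nu> + \<mu> \<in> grid n s (Suc j)"
        using grid_diff_int[OF sp(2) True, of "c j - \<nu> + \<mu>"] c(3) minus_in_Ints_iff by fastforce
      have "c(Suc j := c j - \<nu> + \<mu>) \<in> chains n s (Suc j)"
        unfolding chains_def
      proof (intro CollectI conjI allI impI)
        show "(c(Suc j := c j - \<nu> + \<mu>)) 0 = 0" using c(1) by (simp add: chains_def)
      next
        fix i assume "Suc j < i" then show "(c(Suc j := c j - \<nu> + \<mu>)) i = 0"
          using c(1) by (simp add: chains_def)
      next
        fix i assume "i \<le> Suc j" then show "(c(Suc j := c j - \<nu> + \<mu>)) i \<in> grid n s i"
          using c(1) g by (cases "i = Suc j") (auto simp: chains_def)
      next
        fix i assume i: "i < Suc j"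
        show "(c(Suc j := c j - \<nu> + \<mu>)) i < (c(Suc j := c j - \<nu> + \<mu>)) (Suc i)"
          using c(1) i \<nu> by (cases "i = j") (auto simp: chains_def)
        show "(c(Suc j := c j - \<nu> + \<mu>)) (Suc i) < (c(Suc j := c j - \<nu> + \<mu>)) i + 1"
          using c(1) i \<nu> by (cases "i = j") (auto simp: chains_def)
      qed
      then show "(snd p)(Suc j := snd p j - fst p + \<mu>) \<in> Cset n s (Suc j) \<mu>"
        using pc c by (auto simp: Cset_def)
    qed
    finally show ?thesis .
  qed
qed


lemma Sset0 [simp]: "{k::nat. k \<le> n \<and> n < k} = {}" by auto

lemma Sset_Suc:
  assumes "i \<le> n"
  shows "{k. k \<le> n \<and> n < k + Suc i} = insert (n - i) {k. k \<le> n \<and> n < k + i}"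
    and "n - i \<notin> {k. k \<le> n \<and> n < k + i}"
  using assms by auto

lemma tele:
  fixes c l :: "nat \<Rightarrow> real"
  assumes st: "\<forall>i\<le>n. c (Suc i) = c i + l (n - i)" and c0: "c 0 = 0"
  shows "i \<le> Suc n \<Longrightarrow> c i = (\<Sum>k \<in> {k. k \<le> n \<and> n < k + i}. l k)"
proof (induction i)
  case 0 then show ?case using c0 by simp
next
  case (Suc i)
  then have i: "i \<le> n" by simp
  have "c (Suc i) = c i + l (n - i)" using st i by simp
  also have "\<dots> = (\<Sum>k \<in> {k. k \<le> n \<and> n < k + i}. l k) + l (n - i)" using Suc i by simp
  also have "\<dots> = (\<Sum>k \<in> {k. k \<le> n \<and> n < k + Suc i}. l k)"
    unfolding Sset_Suc(1)[OF i] using Sset_Suc(2)[OF i] by simp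
  finally show ?case .
qed

lemma vertex_sum:
  assumes "1 \<le> j" "j \<le> n"
  shows "(\<Sum>i\<le>n. l i * lecture_hall_vertex n s i j) = real (s j) * (\<Sum>k \<in> {k. k \<le> n \<and> n < k + j}. l k)"
proof -
  have "(\<Sum>i\<le>n. l i * lecture_hall_vertex n s i j) = (\<Sum>i\<le>n. if n < i + j then l i * real (s j) else 0)"
    using assms by (intro sum.cong) (auto simp: lecture_hall_vertex_def)
  also have "\<dots> = (\<Sum>i \<in> {i \<in> {..n}. n < i + j}. l i * real (s j))"
    by (rule sum.inter_filter[symmetric]) simp
  also have "{i \<in> {..n}. n < i + j} = {k. k \<le> n \<and> n < k + j}" by auto
  finally show ?thesis by (simp add: sum_distrib_left mult.commute)
qed

definition phi :: "nat \<Rightarrow> (nat \<Rightarrow> nat) \<Rightarrow> (nat \<Rightarrow> real) \<Rightarrow> nat \<Rightarrow> real" where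
  "phi n s c = (\<lambda>j. if 1 \<le> j \<and> j \<le> n then real (s j) * c j else if j = n + 1 then c (n + 1) else 0)"

lemma grid_last: "grid n s (Suc n) = \<int>"
  by (auto simp: grid_def sg_def elim!: Ints_cases)

lemma grid_mid: "1 \<le> i \<Longrightarrow> i \<le> n \<Longrightarrow> grid n s i = {r. \<exists>k::int. r = of_int k / of_nat (s i)}"
  by (simp add: grid_def sg_def)

lemma box_eq:
  assumes pos: "\<forall>j. 1 \<le> j \<and> j \<le> n \<longrightarrow> 0 < s j"
  shows "box_points n n (lecture_hall_vertex n s) = phi n s ` chains n s (Suc n)"
proof
  show "box_points n n (lecture_hall_vertex n s) \<subseteq> phi n s ` chains n s (Suc n)"
  proof
    fix x assume x: "x \<in> box_points n n (lecture_hall_vertex n s)"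
    then obtain l where l: "\<forall>i\<le>n. 0 < l i \<and> l i < 1"
      and xe: "x = (\<lambda>j. if 1 \<le> j \<and> j \<le> n then (\<Sum>i\<le>n. l i * lecture_hall_vertex n s i j)
                    else if j = n + 1 then (\<Sum>i\<le>n. l i) else 0)"
      and xi: "\<forall>j. x j \<in> \<int>"
      by (auto simp: box_points_def open_parallelepiped_def)
    define c where "c = (\<lambda>i. if i \<le> Suc n then (\<Sum>k \<in> {k. k \<le> n \<and> n < k + i}. l k) else 0)"
    have c0: "c 0 = 0" by (simp add: c_def)
    have cs: "c (Suc i) = c i + l (n - i)" if "i \<le> n" for i
      using that Sset_Suc[OF that] by (simp add: c_def)
    have clast: "c (Suc n) = (\<Sum>i\<le>n. l i)"
    proof -
      have "{k. k \<le> n \<and> n < k + Suc n} = {..n}" by auto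
      then show ?thesis by (simp add: c_def)
    qed
    have xmid: "x j = real (s j) * c j" if "1 \<le> j" "j \<le> n" for j
      using that xe vertex_sum[OF that, of l s] by (simp add: c_def)
    have xlast: "x (Suc n) = c (Suc n)" using xe clast by simp
    have "c \<in> chains n s (Suc n)"
      unfolding chains_def
    proof (intro CollectI conjI allI impI)
      show "c 0 = 0" by (rule c0)
    next
      fix i assume "Suc n < i" then show "c i = 0" by (simp add: c_def)
    next
      fix i assume i: "i \<le> Suc n"
      show "c i \<in> grid n s i"
      proof (cases "i = 0")
        case True then show ?thesis using c0 zero_in_grid by simp
      next
        case False
        show ?thesis
        proof (cases "i = Suc n")
          case True then show ?thesis using xlast xi grid_last by metis
        next
          case False
          then have ii: "1 \<le> i" "i \<le> n" using i \<open>i \<noteq> 0\<close> by auto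
          obtain k :: int where k: "x i = of_int k" using xi by (meson Ints_cases)
          have "s i > 0" using pos ii by auto
          then have "c i = of_int k / of_nat (s i)" using xmid[OF ii] k by (simp add: field_simps)
          then show ?thesis using grid_mid[OF ii] by auto
        qed
      qed
    next
      fix i assume i: "i < Suc n"
      then show "c i < c (Suc i)" "c (Suc i) < c i + 1" using cs[of i] l by auto
    qed
    moreover have "x = phi n s c"
    proof
      fix j show "x j = phi n s c j"
        using xmid xlast by (cases "1 \<le> j \<and> j \<le> n") (auto simp: phi_def xe)
    qed
    ultimately show "x \<in> phi n s ` chains n s (Suc n)" by blast
  qed
next
  show "phi n s ` chains n s (Suc n) \<subseteq> box_points n n (lecture_hall_vertex n s)"
  proof
    fix x assume "x \<in> phi n s ` chains n s (Suc n)"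
    then obtain c where c: "c \<in> chains n s (Suc n)" and x: "x = phi n s c" by auto
    define l where "l = (\<lambda>k. c (Suc (n - k)) - c (n - k))"
    have st: "\<forall>i\<le>n. c (Suc i) = c i + l (n - i)"
      by (auto simp: l_def Suc_diff_le)
    have c0: "c 0 = 0" using c by (simp add: chains_def)
    have ct: "\<And>i. i \<le> Suc n \<Longrightarrow> c i = (\<Sum>k \<in> {k. k \<le> n \<and> n < k + i}. l k)"
      using tele[OF st c0] by blast
    have lb: "\<forall>i\<le>n. 0 < l i \<and> l i < 1"
    proof (intro allI impI)
      fix i assume "i \<le> n"
      then have "n - i < Suc n" by simp
      then show "0 < l i \<and> l i < 1" using c by (auto simp: l_def chains_def)
    qed
    have clast: "c (Suc n) = (\<Sum>i\<le>n. l i)"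
    proof -
      have "{k. k \<le> n \<and> n < k + Suc n} = {..n}" by auto
      then show ?thesis using ct[of "Suc n"] by simp
    qed
    have xe: "x = (\<lambda>j. if 1 \<le> j \<and> j \<le> n then (\<Sum>i\<le>n. l i * lecture_hall_vertex n s i j)
                    else if j = n + 1 then (\<Sum>i\<le>n. l i) else 0)"
    proof
      fix j show "x j = (if 1 \<le> j \<and> j \<le> n then (\<Sum>i\<le>n. l i * lecture_hall_vertex n s i j)
                    else if j = n + 1 then (\<Sum>i\<le>n. l i) else 0)"
        using vertex_sum[of j n l s] ct[of j] clast by (auto simp: x phi_def)
    qed
    have xi: "x j \<in> \<int>" for j
    proof (cases "1 \<le> j \<and> j \<le> n")
      case True
      then have "c j \<in> grid n s j" using c by (auto simp: chains_def)
      then obtain k :: int where k: "c j = of_int k / of_nat (s j)" using grid_mid[of j n s] True by auto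
      have "s j > 0" using pos True by auto
      then have "x j = of_int k" using True k by (simp add: x phi_def)
      then show ?thesis by simp
    next
      case False
      show ?thesis
      proof (cases "j = Suc n")
        case True
        then have "c j \<in> grid n s (Suc n)" using c by (auto simp: chains_def)
        then show ?thesis using True False grid_last by (simp add: x phi_def)
      qed (use False in \<open>auto simp add: x phi_def\<close>)
    qed
    show "x \<in> box_points n n (lecture_hall_vertex n s)"
      unfolding box_points_def open_parallelepiped_def using lb xe xi by blast
  qed
qed

lemma phi_inj:
  assumes pos: "\<forall>j. 1 \<le> j \<and> j \<le> n \<longrightarrow> 0 < s j"
  shows "inj_on (phi n s) (chains n s (Suc n))"
proof (rule inj_onI)
  fix c d assume cd: "c \<in> chains n s (Suc n)" "d \<in> chains n s (Suc n)" "phi n s c = phi n s d"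
  show "c = d"
  proof
    fix i
    show "c i = d i"
    proof (cases "1 \<le> i \<and> i \<le> n")
      case True
      then have "real (s i) * c i = real (s i) * d i" using fun_cong[OF cd(3), of i] by (simp add: phi_def)
      moreover have "s i > 0" using pos True by auto
      ultimately show ?thesis by simp
    next
      case False
      show ?thesis
      proof (cases "i = Suc n")
        case True then show ?thesis using fun_cong[OF cd(3), of i] by (simp add: phi_def)
      next
        case F2: False
        then have "i = 0 \<or> i > Suc n" using False by auto
        then show ?thesis using cd(1,2) by (auto simp: chains_def)
      qed
    qed
  qed
qed

lemma sder_eq:
  assumes pos: "\<forall>j. 1 \<le> j \<and> j \<le> n \<longrightarrow> 0 < s j"
  shows "s_derangement_poly n s = uu n s (Suc n) 0"
proof -
  have "Cset n s (Suc n) 0 = chains n s (Suc n)"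
  proof -
    have "c (Suc n) \<in> \<int> \<and> 0 \<le> c (Suc n)" if "c \<in> chains n s (Suc n)" for c
      using that chains_bounds[OF that, of "Suc n"] grid_last[of n s] by (auto simp: chains_def)
    then show ?thesis by (auto simp: Cset_def)
  qed
  then have "uu n s (Suc n) 0 = (\<Sum>c \<in> chains n s (Suc n). monom 1 (nat \<lfloor>c (Suc n)\<rfloor>))"
    using uu_chains[OF pos, of "Suc n" 0] by simp
  also have "\<dots> = (\<Sum>x \<in> phi n s ` chains n s (Suc n). monom 1 (nat \<lfloor>x (n + 1)\<rfloor>))"
    by (subst sum.reindex[OF phi_inj[OF pos]]) (simp add: phi_def)
  finally show ?thesis
    by (simp add: s_derangement_poly_def local_hstar_def box_eq[OF pos])
qed



definition lcs :: "(nat \<Rightarrow> real) \<Rightarrow> bool" where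
  "lcs a \<longleftrightarrow> (\<forall>k\<ge>1. a (k - 1) * a (k + 1) \<le> (a k)\<^sup>2)"

definition nzs :: "(nat \<Rightarrow> real) \<Rightarrow> bool" where
  "nzs a \<longleftrightarrow> (\<forall>i j k. i < j \<longrightarrow> j < k \<longrightarrow> 0 < a i \<longrightarrow> 0 < a k \<longrightarrow> 0 < a j)"

lemma cross_ineq:
  fixes x y w v :: real
  assumes "0 \<le> x" "0 \<le> y" "0 \<le> w" "0 \<le> v" "x * w \<le> y\<^sup>2" "y * v \<le> w\<^sup>2"
    and "0 < x \<Longrightarrow> 0 < v \<Longrightarrow> 0 < y \<and> 0 < w"
  shows "x * v \<le> y * w"
proof (cases "0 < x \<and> 0 < v")
  case True
  then have yw: "0 < y" "0 < w" using assms by auto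
  have "(x * w) * (y * v) \<le> y\<^sup>2 * w\<^sup>2"
    by (rule mult_mono) (use assms in auto)
  then have "(x * v) * (y * w) \<le> (y * w) * (y * w)" by (simp add: power2_eq_square ac_simps)
  then show ?thesis using yw by (simp add: mult_le_cancel_right_pos)
next
  case False
  then have "x * v = 0" using assms by auto
  moreover have "0 \<le> y * w" using assms by simp
  ultimately show ?thesis by linarith
qed

lemma step_ineq:
  fixes x y w v t :: real
  assumes "0 \<le> t" "x * w \<le> y\<^sup>2" "y * v \<le> w\<^sup>2" "x * v \<le> y * w"
  shows "(x + t * y) * (w + t * v) \<le> (y + t * w)\<^sup>2"
proof -
  have e1: "(x + t * y) * (w + t * v) = x * w + t * (x * v) + t * (y * w) + t\<^sup>2 * (y * v)"
    by (simp add: algebra_simps power2_eq_square)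
  have e2: "(y + t * w)\<^sup>2 = y\<^sup>2 + 2 * t * (y * w) + t\<^sup>2 * w\<^sup>2"
    by (simp add: algebra_simps power2_eq_square)
  have "t * (x * v) \<le> t * (y * w)" using assms by (simp add: mult_left_mono)
  moreover have "t\<^sup>2 * (y * v) \<le> t\<^sup>2 * w\<^sup>2" using assms by (simp add: mult_left_mono)
  ultimately show ?thesis using e1 e2 assms(2) by linarith
qed

lemma mult_step:
  fixes a :: "nat \<Rightarrow> real"
  assumes nn: "\<forall>k. 0 \<le> a k" and lc: "lcs a" and nz: "nzs a" and t: "0 \<le> t"
  defines "b \<equiv> (\<lambda>k. if k = 0 then t * a 0 else a (k - 1) + t * a k)"
  shows "(\<forall>k. 0 \<le> b k) \<and> lcs b \<and> nzs b"
proof (intro conjI)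
  show "\<forall>k. 0 \<le> b k" using nn t by (simp add: b_def)
next
  have lcS: "a m * a (Suc (Suc m)) \<le> (a (Suc m))\<^sup>2" for m
    using lc[unfolded lcs_def, rule_format, of "Suc m"] by simp
  show "lcs b" unfolding lcs_def
  proof (intro allI impI)
    fix k :: nat assume "1 \<le> k"
    then obtain m where k: "k = Suc m" by (cases k) auto
    show "b (k - 1) * b (k + 1) \<le> (b k)\<^sup>2"
    proof (cases m)
      case 0
      have "(0 + t * a 0) * (a 1 + t * a 2) \<le> (a 0 + t * a 1)\<^sup>2"
      proof (rule step_ineq[OF t])
        show "0 * a 1 \<le> (a 0)\<^sup>2" by simp
        show "a 0 * a 2 \<le> (a 1)\<^sup>2" using lcS[of 0] by (simp add: eval_nat_numeral)
        show "0 * a 2 \<le> a 0 * a 1" using nn by simp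
      qed
      moreover have "b (k - 1) = t * a 0" "b (k + 1) = a 1 + t * a 2" "b k = a 0 + t * a 1"
        using k 0 by (simp_all add: b_def eval_nat_numeral)
      ultimately show ?thesis by simp
    next
      case (Suc m')
      have c: "a m' * a (Suc (Suc (Suc m'))) \<le> a (Suc m') * a (Suc (Suc m'))"
      proof (rule cross_ineq)
        show "a m' * a (Suc (Suc m')) \<le> (a (Suc m'))\<^sup>2" by (rule lcS)
        show "a (Suc m') * a (Suc (Suc (Suc m'))) \<le> (a (Suc (Suc m')))\<^sup>2" by (rule lcS)
        assume "0 < a m'" "0 < a (Suc (Suc (Suc m')))"
        then show "0 < a (Suc m') \<and> 0 < a (Suc (Suc m'))"
          using nz unfolding nzs_def by (meson lessI less_SucI)
      qed (use nn in auto)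
      have "(a m' + t * a (Suc m')) * (a (Suc (Suc m')) + t * a (Suc (Suc (Suc m'))))
            \<le> (a (Suc m') + t * a (Suc (Suc m')))\<^sup>2"
        by (rule step_ineq[OF t lcS lcS c])
      then show ?thesis using k Suc by (simp add: b_def)
    qed
  qed
next
  show "nzs b" unfolding nzs_def
  proof (intro allI impI)
    fix i j k assume ij: "i < j" and jk: "j < k" and bi: "0 < b i" and bk: "0 < b k"
    have pos2: "0 < a (q - 1) \<or> 0 < a q" if "q \<noteq> 0" "0 < b q" for q
    proof (rule ccontr)
      assume "\<not> (0 < a (q - 1) \<or> 0 < a q)"
      then have "a (q - 1) = 0" "a q = 0" using nn by (auto simp: order_le_less)
      then show False using that by (simp add: b_def)
    qed
    obtain i' where i': "i' \<le> j - 1" "0 < a i'"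
    proof (cases "i = 0")
      case True
      then have "0 < t * a 0" using bi by (simp add: b_def)
      then have "0 < a 0" using t nn by (simp add: zero_less_mult_iff)
      then show ?thesis using that by auto
    next
      case False
      then have "0 < a (i - 1) \<or> 0 < a i" using pos2 bi by blast
      moreover have "i - 1 \<le> j - 1" "i \<le> j - 1" using ij by auto
      ultimately show ?thesis using that by blast
    qed
    obtain k' where k': "j - 1 < k'" "0 < a k'"
    proof -
      have "k \<noteq> 0" using jk by simp
      then have "0 < a (k - 1) \<or> 0 < a k" using pos2 bk by blast
      moreover have "j - 1 < k - 1" "j - 1 < k" using ij jk by auto
      ultimately show ?thesis using that by blast
    qed
    have "0 < a (j - 1)"
    proof (cases "i' = j - 1")
      case True then show ?thesis using i' by simp
    next
      case False
      then have "i' < j - 1" using i' by simp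
      then show ?thesis using nz k' i' unfolding nzs_def by blast
    qed
    then show "0 < b j" using ij nn t by (simp add: b_def add_pos_nonneg)
  qed
qed


lemma prop_desc:
  fixes a :: "nat \<Rightarrow> real"
  assumes nn: "\<forall>k. 0 \<le> a k" and lc: "lcs a" and nz: "nzs a" and d: "a (Suc k) < a k"
  shows "k \<le> i \<Longrightarrow> a (Suc i) \<le> a i"
proof -
  have ak: "0 < a k" using nn d by (meson le_less_trans)
  have Q: "a (Suc i) < a i \<or> a (Suc i) = 0" if "k \<le> i" for i
    using that
  proof (induction i rule: dec_induct)
    case base then show ?case using d by simp
  next
    case (step i)
    show ?case
    proof (cases "a (Suc i) = 0")
      case True
      have "a (Suc (Suc i)) = 0"
      proof (rule ccontr)
        assume "a (Suc (Suc i)) \<noteq> 0"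
        then have "0 < a (Suc (Suc i))" using nn[rule_format, of "Suc (Suc i)"] by linarith
        then have "0 < a (Suc i)" using nz ak step(1) unfolding nzs_def by (meson le_imp_less_Suc lessI)
        then show False using True by simp
      qed
      then show ?thesis by simp
    next
      case False
      then have pos: "0 < a (Suc i)" using nn[rule_format, of "Suc i"] by linarith
      then have lt: "a (Suc i) < a i" using step(3) False by simp
      have ai: "0 < a i" using pos lt by simp
      have "a i * a (Suc (Suc i)) \<le> (a (Suc i))\<^sup>2"
        using lc[unfolded lcs_def, rule_format, of "Suc i"] by simp
      also have "\<dots> < a i * a (Suc i)" using pos lt by (simp add: power2_eq_square)
      finally have "a (Suc (Suc i)) < a (Suc i)" using ai by simp
      then show ?thesis by simp
    qed
  qed
  assume "k \<le> i"
  then show "a (Suc i) \<le> a i" using Q[of i] nn by auto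
qed

lemma unimodal_seq:
  fixes a :: "nat \<Rightarrow> real"
  assumes nn: "\<forall>k. 0 \<le> a k" and lc: "lcs a" and nz: "nzs a" and fin: "\<forall>k>N. a k = 0"
  shows "\<exists>m. (\<forall>k<m. a k \<le> a (k + 1)) \<and> (\<forall>k\<ge>m. a (k + 1) \<le> a k)"
proof (cases "\<exists>k. a (Suc k) < a k")
  case True
  define m where "m = (LEAST k. a (Suc k) < a k)"
  have m: "a (Suc m) < a m" unfolding m_def using True by (meson LeastI_ex)
  have "\<forall>k<m. a k \<le> a (k + 1)"
    using not_less_Least[of _ "\<lambda>k. a (Suc k) < a k"] by (auto simp: m_def not_less)
  moreover have "\<forall>k\<ge>m. a (k + 1) \<le> a k" using prop_desc[OF nn lc nz m] by simp
  ultimately show ?thesis by blast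
next
  case False
  then have mono: "\<And>k. a k \<le> a (Suc k)" by (simp add: not_less)
  have "a (k + 1) \<le> a k" for k
  proof -
    have "a (k + 1) \<le> a (Suc (max (k + 1) N))"
      by (rule lift_Suc_mono_le[of a, OF mono]) simp
    also have "\<dots> = 0" using fin by simp
    finally show ?thesis using nn by (metis order_trans)
  qed
  then show ?thesis by (intro exI[of _ 0]) simp
qed

lemma map_of_real_mult:
  "map_poly (of_real :: real \<Rightarrow> complex) (p * q) = map_poly of_real p * map_poly of_real q"
  by (rule poly_eqI) (simp add: coeff_map_poly coeff_mult)

lemma poly_of_real_real:
  "poly (map_poly (of_real :: real \<Rightarrow> complex) p) (of_real x) = of_real (poly p x)"
  by (induction p) (auto simp: map_poly_pCons)

lemma coeff_lin_mult:
  fixes q :: "real poly"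
  shows "coeff ([:t, 1:] * q) k = (if k = 0 then t * coeff q 0 else coeff q (k - 1) + t * coeff q k)"
proof -
  have "[:t, 1:] * q = smult t q + pCons 0 q" by (simp add: mult_pCons_left)
  then show ?thesis by (cases k) (auto simp: coeff_pCons)
qed

lemma rr_coeffs:
  fixes q :: "real poly"
  assumes "degree q = d" "lead_coeff q > 0"
    "\<forall>z. poly (map_poly of_real q) z = (0::complex) \<longrightarrow> z \<in> \<real> \<and> Re z \<le> 0"
  shows "(\<forall>k. 0 \<le> coeff q k) \<and> lcs (coeff q) \<and> nzs (coeff q)"
  using assms
proof (induction d arbitrary: q)
  case 0
  have z: "\<And>k. k > 0 \<Longrightarrow> coeff q k = 0" using 0 by (simp add: coeff_eq_0)
  have c0: "coeff q 0 > 0" using 0 by simp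
  have nn: "\<forall>k. 0 \<le> coeff q k"
  proof
    fix k show "0 \<le> coeff q k" using z c0 by (cases "k = 0") auto
  qed
  have "lcs (coeff q)" unfolding lcs_def using z by simp
  moreover have "nzs (coeff q)" unfolding nzs_def
  proof (intro allI impI)
    fix i j k :: nat assume "i < j" "j < k" "0 < coeff q k"
    then show "0 < coeff q j" using z[of k] by simp
  qed
  ultimately show ?case using nn by blast
next
  case (Suc d)
  define Q where "Q = map_poly (of_real :: real \<Rightarrow> complex) q"
  have "degree Q = Suc d" using Suc.prems(1) by (simp add: Q_def degree_map_poly)
  then have "\<not> constant (poly Q)" by (simp add: constant_degree)
  then obtain z where z: "poly Q z = 0" using fundamental_theorem_of_algebra by blast
  then have zr: "z \<in> \<real>" "Re z \<le> 0" using Suc.prems(3) by (auto simp: Q_def)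
  define r where "r = Re z"
  have zof: "z = of_real r" using zr(1) by (simp add: r_def complex_is_Real_iff complex_eq_iff)
  have "of_real (poly q r) = (0::complex)" using z zof poly_of_real_real[of q r] by (simp add: Q_def)
  then have "poly q r = 0" by simp
  then obtain q' where q': "q = [:-r, 1:] * q'" using poly_eq_0_iff_dvd by (metis dvdE)
  define t where "t = - r"
  have t: "0 \<le> t" using zr by (simp add: t_def r_def)
  have qt: "q = [:t, 1:] * q'" using q' by (simp add: t_def)
  have q0: "q \<noteq> 0" using Suc.prems(2) by auto
  then have q'0: "q' \<noteq> 0" using qt by auto
  have "degree q = degree [:t, 1:] + degree q'" unfolding qt by (rule degree_mult_eq) (use q'0 in auto)
  then have "degree q = 1 + degree q'" by simp
  then have dq': "degree q' = d" using Suc.prems(1) by simp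
  have "lead_coeff q = lead_coeff [:t, 1:] * lead_coeff q'" unfolding qt by (rule lead_coeff_mult)
  then have lq': "lead_coeff q' > 0" using Suc.prems(2) by simp
  have rq': "\<forall>z. poly (map_poly of_real q') z = (0::complex) \<longrightarrow> z \<in> \<real> \<and> Re z \<le> 0"
  proof (intro allI impI)
    fix w :: complex assume "poly (map_poly of_real q') w = 0"
    then have "poly (map_poly of_real q) w = 0" unfolding qt map_of_real_mult by simp
    then show "w \<in> \<real> \<and> Re w \<le> 0" using Suc.prems(3) by blast
  qed
  have IH: "(\<forall>k. 0 \<le> coeff q' k) \<and> lcs (coeff q') \<and> nzs (coeff q')"
    using Suc.IH[OF dq' lq' rq'] .
  have cq: "coeff q = (\<lambda>k. if k = 0 then t * coeff q' 0 else coeff q' (k - 1) + t * coeff q' k)"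
    unfolding qt by (rule ext) (rule coeff_lin_mult)
  show ?case unfolding cq using mult_step[of "coeff q'" t] IH t by blast
qed

lemma lc_unimodal_of_rr:
  fixes p :: "int poly"
  assumes rr: "real_rooted p" and nn: "\<forall>k. 0 \<le> coeff p k"
  shows "log_concave_poly p \<and> unimodal_poly p"
proof (cases "p = 0")
  case True
  then show ?thesis by (auto simp: log_concave_poly_def unimodal_poly_def)
next
  case False
  define q where "q = map_poly (real_of_int) p"
  have cq: "\<And>k. coeff q k = real_of_int (coeff p k)" by (simp add: q_def coeff_map_poly)
  have dq: "degree q = degree p" by (simp add: q_def degree_map_poly)
  have lp: "lead_coeff p > 0" using nn False by (metis leading_coeff_0_iff order_le_less)
  then have lq: "lead_coeff q > 0" using cq dq by simp
  have mm: "map_poly (of_real :: real \<Rightarrow> complex) q = map_poly of_int p"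
    by (rule poly_eqI) (simp add: q_def coeff_map_poly)
  have roots: "\<forall>z. poly (map_poly of_real q) z = (0::complex) \<longrightarrow> z \<in> \<real> \<and> Re z \<le> 0"
  proof (intro allI impI)
    fix z :: complex assume z: "poly (map_poly of_real q) z = 0"
    then have zR: "z \<in> \<real>" using rr False mm by (simp add: real_rooted_def)
    define x where "x = Re z"
    have zof: "z = of_real x" using zR by (simp add: x_def complex_is_Real_iff complex_eq_iff)
    have px: "poly q x = 0" using z zof poly_of_real_real[of q x] by simp
    have "Re z \<le> 0"
    proof (rule ccontr)
      assume "\<not> Re z \<le> 0"
      then have x0: "x > 0" by (simp add: x_def)
      have "0 < coeff q (degree q) * x ^ degree q" using lq x0 by simp
      also have "\<dots> \<le> (\<Sum>i\<le>degree q. coeff q i * x ^ i)"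
        by (rule member_le_sum) (use cq nn x0 in auto)
      also have "\<dots> = poly q x" by (simp add: poly_altdef)
      finally show False using px by simp
    qed
    then show "z \<in> \<real> \<and> Re z \<le> 0" using zR by simp
  qed
  have P: "(\<forall>k. 0 \<le> coeff q k) \<and> lcs (coeff q) \<and> nzs (coeff q)"
    using rr_coeffs[OF refl lq roots] .
  have "log_concave_poly p"
    unfolding log_concave_poly_def
  proof (intro allI impI)
    fix k :: nat assume "1 \<le> k"
    then have "coeff q (k - 1) * coeff q (k + 1) \<le> (coeff q k)\<^sup>2"
      using P by (simp add: lcs_def)
    then have "real_of_int (coeff p (k - 1) * coeff p (k + 1)) \<le> real_of_int ((coeff p k)\<^sup>2)"
      by (simp add: cq)
    then show "coeff p (k - 1) * coeff p (k + 1) \<le> (coeff p k)\<^sup>2" by (simp only: of_int_le_iff)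
  qed
  moreover have "unimodal_poly p"
  proof -
    have "\<forall>k>degree q. coeff q k = 0" by (simp add: coeff_eq_0)
    then obtain m where m: "\<forall>k<m. coeff q k \<le> coeff q (k + 1)" "\<forall>k\<ge>m. coeff q (k + 1) \<le> coeff q k"
      using unimodal_seq[of "coeff q"] P by blast
    then show ?thesis unfolding unimodal_poly_def by (intro exI[of _ m]) (simp add: cq)
  qed
  ultimately show ?thesis by blast
qed


lemma map_cnj_of_int: "map_poly cnj (map_poly (of_int :: int \<Rightarrow> complex) p) = map_poly of_int p"
  by (rule poly_eqI) (simp add: coeff_map_poly)

lemma sder_real_rooted:
  assumes pos: "\<forall>j. 1 \<le> j \<and> j \<le> n \<longrightarrow> 0 < s j"
  shows "real_rooted (s_derangement_poly n s)"
proof -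
  define d where "d = s_derangement_poly n s"
  have dd: "d = uu n s (Suc n) 0" using sder_eq[OF pos] by (simp add: d_def)
  have nz: "ev d z \<noteq> 0" if "d \<noteq> 0" "0 < Im z" for z
    using uu_inv[OF pos that(2), of "Suc n"] that(1) dd by auto
  have "\<forall>z::complex. poly (map_poly of_int d) z = 0 \<longrightarrow> z \<in> \<real>" if d0: "d \<noteq> 0"
  proof (intro allI impI)
    fix z :: complex assume z: "poly (map_poly of_int d) z = 0"
    have "Im z = 0"
    proof (rule ccontr)
      assume "Im z \<noteq> 0"
      then consider "0 < Im z" | "Im z < 0" by linarith
      then show False
      proof cases
        case 1 then show False using nz[OF d0 1] z by (simp add: ev_def)
      next
        case 2
        have "poly (map_poly of_int d) (cnj z) = cnj (poly (map_poly of_int d) z)"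
          using poly_map_poly_cnj[of "map_poly of_int d" "cnj z"] by (simp add: map_cnj_of_int)
        then have "ev d (cnj z) = 0" using z by (simp add: ev_def)
        moreover have "0 < Im (cnj z)" using 2 by simp
        ultimately show False using nz[OF d0] by blast
      qed
    qed
    then show "z \<in> \<real>" by (simp add: complex_is_Real_iff)
  qed
  then show ?thesis unfolding real_rooted_def d_def[symmetric] by blast
qed

lemma sder_nonneg: "\<forall>k. 0 \<le> coeff (s_derangement_poly n s) k"
  by (simp add: s_derangement_poly_def local_hstar_def coeff_sum coeff_monom sum_nonneg)

theorem theorem3p6:
  fixes n :: nat and s :: "nat \<Rightarrow> nat"
  assumes "\<forall>j. 1 \<le> j \<and> j \<le> n \<longrightarrow> 0 < s j"
  shows "real_rooted (s_derangement_poly n s) \<and> log_concave_poly (s_derangement_poly n s)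
         \<and> unimodal_poly (s_derangement_poly n s)"
  using sder_real_rooted[OF assms] lc_unimodal_of_rr[OF sder_real_rooted[OF assms] sder_nonneg] by blast

end
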